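(* As $n\to\infty$, $B_2(n,2,3;3)=\Theta(2^n)$.
   Context: For a prime power $q$, $\mathcal{G}_q(n,k)$ denotes the set of all $k$-dimensional subspaces of $\mathbb{F}_q^n$. An $\alpha$-$(n,k,\delta)_q^c$ covering Grassmannian code is a subset $\mathcal{C}\subseteq\mathcal{G}_q(n,k)$ (no repeated codewords) such that every set of $\alpha$ distinct codewords of $\mathcal{C}$ spans a subspace of $\mathbb{F}_q^n$ of dimension at least $k+\delta$. $B_q(n,k,\delta;\alpha)$ denotes the maximum size of an $\alpha$-$(n,k,\delta)_q^c$ code. *)

theory Defs
  imports Main "HOL-Library.Function_Algebras" "HOL-Library.Z2" "HOL-Library.Landau_Symbols"
begin

text \<open>Vectors of F_q^n are represented as functions nat => 'a (field 'a) vanishing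
  outside the coordinates 0..n-1; the vector space structure is pointwise.\<close>

definition fvec_scale :: "'a::field \<Rightarrow> (nat \<Rightarrow> 'a) \<Rightarrow> (nat \<Rightarrow> 'a)" where
  "fvec_scale c v = (\<lambda>i. c * v i)"

definition ambient :: "nat \<Rightarrow> (nat \<Rightarrow> 'a::field) set" where
  "ambient n = {v. \<forall>i\<ge>n. v i = 0}"

definition grass :: "nat \<Rightarrow> nat \<Rightarrow> (nat \<Rightarrow> 'a::field) set set" where
  "grass n k = {W. W \<subseteq> ambient n \<and> module.subspace fvec_scale W
                   \<and> vector_space.dim fvec_scale W = k}"

definition covering_code :: "nat \<Rightarrow> nat \<Rightarrow> nat \<Rightarrow> nat \<Rightarrow> (nat \<Rightarrow> 'a::field) set set \<Rightarrow> bool" where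
  "covering_code n k \<delta> \<alpha> C \<longleftrightarrow> C \<subseteq> grass n k \<and>
     (\<forall>A \<subseteq> C. card A = \<alpha> \<longrightarrow>
        k + \<delta> \<le> vector_space.dim fvec_scale (module.span fvec_scale (\<Union>A)))"

definition B2 :: "nat \<Rightarrow> nat \<Rightarrow> nat \<Rightarrow> nat \<Rightarrow> nat" where
  "B2 n k \<delta> \<alpha> = Max {card C | C :: (nat \<Rightarrow> bit) set set. covering_code n k \<delta> \<alpha> C}"

end

theory Submission
  imports Defs
begin

lemma bit_cases2: "(x::bit) = 0 \<or> x = 1" by (cases x) auto

lemma bit_add_self[simp]: "(x::bit) + x = 0" by (cases x) auto

interpretation V: vector_space "fvec_scale :: bit \<Rightarrow> (nat \<Rightarrow> bit) \<Rightarrow> (nat \<Rightarrow> bit)"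
  by unfold_locales (auto simp: fvec_scale_def fun_eq_iff algebra_simps)

lemma coord_subspace: "V.subspace {v. \<forall>i\<in>I. v i = 0}"
  unfolding V.subspace_def by (auto simp: fvec_scale_def)

lemma ambient_subspace: "V.subspace (ambient n)"
proof -
  have "ambient n = {v::nat\<Rightarrow>bit. \<forall>i\<in>{n..}. v i = 0}" by (auto simp: ambient_def)
  thus ?thesis using coord_subspace by simp
qed

lemma span_coord: "S \<subseteq> {v. \<forall>i\<in>I. v i = 0} \<Longrightarrow> V.span S \<subseteq> {v. \<forall>i\<in>I. v i = 0}"
  by (rule V.span_minimal[OF _ coord_subspace])

lemma ambient_lt: "v \<in> ambient n \<Longrightarrow> v i \<noteq> 0 \<Longrightarrow> i < n"
  unfolding ambient_def using not_le by blast

lemma ambient_finite_card: "finite (ambient n :: (nat\<Rightarrow>bit) set) \<and> card (ambient n :: (nat\<Rightarrow>bit) set) \<le> 2^n"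
proof -
  let ?f = "\<lambda>v::nat\<Rightarrow>bit. {i. v i \<noteq> 0}"
  have inj: "inj_on ?f (ambient n)"
  proof (rule inj_onI)
    fix v w :: "nat\<Rightarrow>bit" assume "?f v = ?f w"
    hence "\<And>i. (v i \<noteq> 0) = (w i \<noteq> 0)" by blast
    thus "v = w" by (metis bit_cases2 zero_neq_one fun_eq_iff)
  qed
  have sub: "?f ` ambient n \<subseteq> Pow {..<n}" using ambient_lt by blast
  show ?thesis using inj_on_finite[OF inj sub] card_inj_on_le[OF inj sub] card_Pow[of "{..<n}"] by simp
qed

lemma ambient_card_ge: "2^m \<le> card (ambient m :: (nat\<Rightarrow>bit) set)"
proof -
  let ?g = "\<lambda>S i. if i \<in> S then (1::bit) else 0"
  have inj: "inj_on ?g (Pow {..<m})"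
  proof (rule inj_onI)
    fix S T assume "?g S = ?g T"
    hence "\<And>i. (i \<in> S) = (i \<in> T)" by (metis zero_neq_one)
    thus "S = T" by blast
  qed
  have sub: "?g ` Pow {..<m} \<subseteq> ambient m" by (auto simp: ambient_def)
  show ?thesis using card_inj_on_le[OF inj sub] ambient_finite_card[of m] card_Pow[of "{..<m}"] by simp
qed

lemma two_dim_pair:
  assumes "V.dim U = 2" "v \<in> U" "v \<noteq> 0"
  shows "\<exists>x. U \<subseteq> V.span {v,x}"
proof -
  have "{v} \<subseteq> U" "V.independent {v}" using assms by auto
  then obtain B where B: "{v} \<subseteq> B" "B \<subseteq> U" "V.independent B" "U \<subseteq> V.span B"
    by (metis V.maximal_independent_subset_extend)
  have "card B = 2" using V.basis_card_eq_dim[OF B(2) B(4) B(3)] assms by simp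
  then obtain x y where "B = {x,y}" by (auto simp: card_2_iff)
  hence "B \<subseteq> {v, if x = v then y else x}" using B(1) by auto
  thus ?thesis using B(4) V.span_mono by blast
qed

lemma dim2_nonzero:
  assumes "V.dim U = 2" shows "\<exists>v\<in>U. v \<noteq> 0"
proof (rule ccontr)
  assume "\<not> ?thesis"
  hence "U \<subseteq> V.span {}" by auto
  hence "V.dim U \<le> card ({}::(nat\<Rightarrow>bit) set)" by (rule V.dim_le_card) simp
  thus False using assms by simp
qed

lemma three_common:
  assumes "V.dim U1 = 2" "V.dim U2 = 2" "V.dim U3 = 2"
    "v \<in> U1" "v \<in> U2" "v \<in> U3" "v \<noteq> 0"
  shows "V.dim (V.span (U1 \<union> U2 \<union> U3)) \<le> 4"
proof -
  obtain x1 x2 x3 where x: "U1 \<subseteq> V.span {v,x1}" "U2 \<subseteq> V.span {v,x2}" "U3 \<subseteq> V.span {v,x3}"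
    using two_dim_pair assms by metis
  let ?W = "{v,x1,x2,x3}"
  have "V.span {v,x1} \<subseteq> V.span ?W" "V.span {v,x2} \<subseteq> V.span ?W" "V.span {v,x3} \<subseteq> V.span ?W"
    by (auto intro!: V.span_mono)
  hence "U1 \<union> U2 \<union> U3 \<subseteq> V.span ?W" using x by blast
  hence "V.dim (U1 \<union> U2 \<union> U3) \<le> card ?W" by (rule V.dim_le_card) simp
  also have "card ?W \<le> 4" using card_length[of "[v,x1,x2,x3]"] by simp
  finally show ?thesis by simp
qed

lemma upper:
  assumes "covering_code n 2 3 3 (C :: (nat\<Rightarrow>bit) set set)"
  shows "finite C \<and> card C \<le> 2 * 2^n"
proof -
  have Cg: "C \<subseteq> grass n 2" using assms by (simp add: covering_code_def)
  have cov: "\<And>A. A \<subseteq> C \<Longrightarrow> card A = 3 \<Longrightarrow> 5 \<le> V.dim (V.span (\<Union>A))"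
    using assms by (simp add: covering_code_def)
  have finC: "finite C"
  proof (rule finite_subset)
    show "C \<subseteq> Pow (ambient n)" using Cg by (auto simp: grass_def)
    show "finite (Pow (ambient n :: (nat\<Rightarrow>bit) set))" using ambient_finite_card by simp
  qed
  define f where "f U = (SOME v. v \<in> U \<and> v \<noteq> 0)" for U :: "(nat\<Rightarrow>bit) set"
  have fU: "f U \<in> U \<and> f U \<noteq> 0" if "U \<in> C" for U
  proof -
    have "V.dim U = 2" using that Cg by (auto simp: grass_def)
    then obtain v where "v \<in> U \<and> v \<noteq> 0" using dim2_nonzero by blast
    thus ?thesis unfolding f_def by (rule someI[where P="\<lambda>v. v \<in> U \<and> v \<noteq> 0"])
  qed
  have fam: "f ` C \<subseteq> ambient n" using fU Cg by (auto simp: grass_def)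
  have fib: "card {U\<in>C. f U = y} \<le> 2" for y
  proof (rule ccontr)
    assume "\<not> ?thesis"
    hence "3 \<le> card {U\<in>C. f U = y}" by simp
    then obtain A where A: "A \<subseteq> {U\<in>C. f U = y}" "card A = 3"
      by (rule obtain_subset_with_card_n)
    then obtain U1 U2 U3 where U: "A = {U1,U2,U3}" unfolding card_3_iff by blast
    have AC: "A \<subseteq> C" using A(1) by blast
    have inC: "U1 \<in> C" "U2 \<in> C" "U3 \<in> C" using AC U by auto
    have fy: "f U1 = y" "f U2 = y" "f U3 = y" using A(1) U by auto
    have d: "V.dim U1 = 2" "V.dim U2 = 2" "V.dim U3 = 2" using inC Cg by (auto simp: grass_def)
    have "y \<in> U1" "y \<in> U2" "y \<in> U3" "y \<noteq> 0" using fU[OF inC(1)] fU[OF inC(2)] fU[OF inC(3)] fy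
      by simp_all
    hence "V.dim (V.span (U1 \<union> U2 \<union> U3)) \<le> 4" using three_common d by blast
    moreover have "5 \<le> V.dim (V.span (\<Union>A))" using cov[OF AC A(2)] .
    moreover have "\<Union>A = U1 \<union> U2 \<union> U3" using U by auto
    ultimately show False by simp
  qed
  have "C = (\<Union>y\<in>f ` C. {U\<in>C. f U = y})" by auto
  hence "card C \<le> (\<Sum>y\<in>f ` C. card {U\<in>C. f U = y})"
    using card_UN_le[of "f ` C" "\<lambda>y. {U\<in>C. f U = y}"] finC by simp
  also have "\<dots> \<le> (\<Sum>y\<in>f ` C. 2)" by (rule sum_mono) (rule fib)
  also have "\<dots> = 2 * card (f ` C)" by simp
  also have "card (f ` C) \<le> card (ambient n :: (nat\<Rightarrow>bit) set)"
    using card_mono[OF _ fam] ambient_finite_card by blast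
  also have "\<dots> \<le> 2^n" using ambient_finite_card by blast
  finally show ?thesis using finC by simp
qed

declare add_bit_eq_xor[simp del] mult_bit_eq_and[simp del]

lemma bit_add_eq0: "((x::bit) + y = 0) = (x = y)" by (cases x; cases y) auto
lemma bit_one_one[simp]: "(1::bit) + 1 = 0" by simp

lemma fs0[simp]: "fvec_scale 0 v = 0" by (simp add: fvec_scale_def fun_eq_iff)
lemma fs1[simp]: "fvec_scale 1 v = v" by (simp add: fvec_scale_def fun_eq_iff)

lemma span_single_bit: "V.span {p} = {0, p}"
proof -
  have "V.span {p} = range (\<lambda>k. fvec_scale k p)" by (rule V.span_singleton)
  also have "\<dots> = {0, p}"
  proof
    show "range (\<lambda>k. fvec_scale k p) \<subseteq> {0, p}"
    proof
      fix x assume "x \<in> range (\<lambda>k. fvec_scale k p)"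
      then obtain k where k: "x = fvec_scale k p" by blast
      show "x \<in> {0, p}" using bit_cases2[of k] k by (elim disjE) simp_all
    qed
    show "{0, p} \<subseteq> range (\<lambda>k. fvec_scale k p)"
      using fs0[of p, symmetric] fs1[of p, symmetric] by blast
  qed
  finally show ?thesis .
qed

definition uu :: "(nat \<Rightarrow> bit) \<Rightarrow> nat \<Rightarrow> bit" where
  "uu a i = (if i = 0 then 1 else if i = 1 then 0 else a (i - 2))"
definition ww :: "(nat \<Rightarrow> bit) \<Rightarrow> nat \<Rightarrow> bit" where
  "ww a i = (if i \<le> 2 then (if i = 1 then 1 else 0) else a (i - 3))"
definition UU :: "(nat \<Rightarrow> bit) \<Rightarrow> (nat \<Rightarrow> bit) set" where
  "UU a = V.span {uu a, ww a}"

lemma uu0[simp]: "uu a 0 = 1" and uu1[simp]: "uu a 1 = 0" and uu2[simp]: "uu a (Suc (Suc i)) = a i" and uu1'[simp]: "uu a (Suc 0) = 0"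
  by (auto simp: uu_def)
lemma ww0[simp]: "ww a 0 = 0" and ww1[simp]: "ww a 1 = 1" and ww2[simp]: "ww a 2 = 0" and ww1'[simp]: "ww a (Suc 0) = 1" and ww2'[simp]: "ww a (Suc (Suc 0)) = 0"
  and ww3[simp]: "ww a (Suc (Suc (Suc i))) = a i"
  by (auto simp: ww_def)

lemma shift_rel: "(ww a + ww b) (Suc j) = (uu a + uu b) j"
proof (cases j)
  case 0 thus ?thesis by (simp add: ww_def uu_def)
next
  case (Suc k) thus ?thesis by (cases k) (auto simp: ww_def uu_def)
qed

lemma uw_indep: "V.independent {uu a, ww a}"
proof -
  have "V.span {ww a} \<subseteq> {v. \<forall>i\<in>{0}. v i = 0}" by (rule span_coord) simp
  hence "uu a \<notin> V.span {ww a}" by auto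
  moreover have "ww a \<noteq> 0" by (metis ww1 zero_fun_apply zero_neq_one)
  ultimately show ?thesis by (simp add: V.independent_insert)
qed

lemma uw_ne: "uu a \<noteq> ww a" by (metis uu0 ww0 zero_neq_one)

lemma UU_dim: "V.dim (UU a) = 2"
  unfolding UU_def using V.dim_span_eq_card_independent[OF uw_indep] uw_ne by simp

lemma uw_amb: assumes "a \<in> ambient m" shows "uu a \<in> ambient (m+3)" "ww a \<in> ambient (m+3)"
  using assms by (auto simp: ambient_def uu_def ww_def)

lemma UU_amb: assumes "a \<in> ambient m" shows "UU a \<subseteq> ambient (m+3)"
  unfolding UU_def using uw_amb[OF assms] by (intro V.span_minimal ambient_subspace) auto

lemma UU_grass: assumes "a \<in> ambient m" shows "UU a \<in> grass (m+3) 2"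
  unfolding grass_def using UU_amb[OF assms] UU_dim by (auto simp: UU_def V.subspace_span)

definition YY :: "(nat \<Rightarrow> bit) \<Rightarrow> (nat \<Rightarrow> bit) set" where
  "YY a = {v. \<forall>i. v (i+2) = v 0 * a i + v 1 * (if i = 0 then 0 else a (i - 1))}"

lemma YY_subspace: "V.subspace (YY a)"
  unfolding V.subspace_def YY_def by (auto simp: fvec_scale_def algebra_simps)

lemma UU_inj: assumes "UU a = UU b" shows "a = b"
proof -
  have "uu a \<in> YY a" "ww a \<in> YY a" unfolding YY_def
    by (auto simp: uu_def ww_def)
  hence "UU a \<subseteq> YY a" unfolding UU_def by (intro V.span_minimal YY_subspace) auto
  moreover have "uu b \<in> UU b" unfolding UU_def by (rule V.span_base) simp
  ultimately have "uu b \<in> YY a" using assms by auto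
  hence "\<And>i. b i = a i" unfolding YY_def by (simp add: uu_def)
  thus ?thesis by (simp add: fun_eq_iff)
qed

lemma diff_coord:
  assumes "a \<noteq> b"
  shows "uu a + uu b \<noteq> 0"
proof
  assume h: "uu a + uu b = 0"
  have "\<And>i. a i = b i"
  proof -
    fix i
    have "(uu a + uu b) (Suc (Suc i)) = 0" using h by simp
    hence "a i + b i = 0" by simp
    thus "a i = b i" by (simp add: bit_add_eq0)
  qed
  thus False using assms by (simp add: fun_eq_iff)
qed

lemma notin_span_sub: "V.span X \<subseteq> Z \<Longrightarrow> x \<notin> Z \<Longrightarrow> x \<notin> V.span X \<and> x \<notin> X"
  using V.span_superset by blast

lemma triple:
  assumes am: "a \<in> ambient m" "b \<in> ambient m" "c \<in> ambient m"
    and ne: "a \<noteq> b" "a \<noteq> c" "b \<noteq> c"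
  shows "5 \<le> V.dim (V.span (UU a \<union> UU b \<union> UU c))"
proof -
  define S where "S = V.span (UU a \<union> UU b \<union> UU c)"
  have uwU: "uu x \<in> UU x" "ww x \<in> UU x" for x unfolding UU_def by (auto intro: V.span_base)
  have inS: "x \<in> S" if "x \<in> UU a \<union> UU b \<union> UU c" for x
    unfolding S_def using that by (rule V.span_base)
  have uS: "uu a \<in> S" "uu b \<in> S" "uu c \<in> S" "ww a \<in> S" "ww b \<in> S" "ww c \<in> S"
    using inS uwU by blast+
  define p where "p = uu a + uu b"
  define q where "q = uu a + uu c"
  define sp where "sp = ww a + ww b"
  define sq where "sq = ww a + ww c"
  have pS: "p \<in> S" "q \<in> S" "sp \<in> S" "sq \<in> S"
    unfolding p_def q_def sp_def sq_def S_def using uS unfolding S_def by (auto intro: V.span_add)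
  have p0: "p 0 = 0" "p 1 = 0" "q 0 = 0" "q 1 = 0" unfolding p_def q_def by simp_all
  have s0: "sp 0 = 0" "sq 0 = 0" unfolding sp_def sq_def by simp_all
  have sh: "sp (Suc j) = p j" "sq (Suc j) = q j" for j
    unfolding sp_def sq_def p_def q_def by (rule shift_rel)+
  have pnz: "p \<noteq> 0" "q \<noteq> 0" unfolding p_def q_def using diff_coord ne by auto
  have qp: "q \<noteq> p"
  proof
    assume h: "q = p"
    have "\<And>i. c i = b i"
    proof -
      fix i
      have "q (Suc (Suc i)) = p (Suc (Suc i))" using h by simp
      hence "a i + c i = a i + b i" unfolding p_def q_def by simp
      thus "c i = b i" by simp
    qed
    thus False using ne by (simp add: fun_eq_iff)
  qed
  have amb: "p \<in> ambient (m+3)" "q \<in> ambient (m+3)"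
    unfolding p_def q_def using uw_amb am by (auto intro: V.subspace_add[OF ambient_subspace])
  define T where "T = {i. p i \<noteq> 0} \<union> {i. q i \<noteq> 0}"
  have Tsub: "T \<subseteq> {..<m+3}" unfolding T_def using amb ambient_lt by blast
  hence finT: "finite T" by (rule finite_subset) simp
  obtain i0 where "p i0 \<noteq> 0" using pnz by (auto simp: fun_eq_iff)
  hence Tne: "T \<noteq> {}" unfolding T_def by blast
  define t where "t = Max T"
  have tT: "t \<in> T" unfolding t_def using finT Tne by (rule Max_in)
  define Z where "Z = {v::nat\<Rightarrow>bit. \<forall>i\<in>{t<..}. v i = 0}"
  have pZ: "p \<in> Z" "q \<in> Z"
  proof -
    have "\<forall>i\<in>{t<..}. p i = 0 \<and> q i = 0"
    proof
      fix i assume "i \<in> {t<..}"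
      hence "i \<notin> T" using Max_ge[OF finT] unfolding t_def by (auto simp: not_le[symmetric])
      thus "p i = 0 \<and> q i = 0" unfolding T_def by blast
    qed
    thus "p \<in> Z" "q \<in> Z" unfolding Z_def by auto
  qed
  obtain r where r: "r \<in> S" "r (Suc t) \<noteq> 0" "r 0 = 0" "r 1 = 0"
  proof (cases "p t \<noteq> 0")
    case True
    show ?thesis by (rule that[of sp]) (use pS True sh s0 p0 in \<open>simp_all add: sh[of 0, simplified]\<close>)
  next
    case False
    hence "q t \<noteq> 0" using tT unfolding T_def by blast
    show ?thesis by (rule that[of sq]) (use pS \<open>q t \<noteq> 0\<close> sh s0 p0 in \<open>simp_all add: sh[of 0, simplified]\<close>)
  qed
  have rZ: "r \<notin> Z" unfolding Z_def using r(2) by force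
  define Y1 where "Y1 = {v::nat\<Rightarrow>bit. \<forall>i\<in>{1}. v i = 0}"
  define Y0 where "Y0 = {v::nat\<Rightarrow>bit. \<forall>i\<in>{0}. v i = 0}"
  have i1: "V.independent {p}" using pnz by simp
  have q1: "q \<notin> V.span {p} \<and> q \<notin> {p}" using span_single_bit pnz qp by auto
  have i2: "V.independent {q,p}" by (rule V.independent_insertI[OF conjunct1[OF q1] i1])
  have r1: "r \<notin> V.span {q,p} \<and> r \<notin> {q,p}"
    by (rule notin_span_sub[OF _ rZ]) (unfold Z_def, rule span_coord, use pZ in \<open>auto simp: Z_def\<close>)
  have i3: "V.independent {r,q,p}" by (rule V.independent_insertI[OF conjunct1[OF r1] i2])
  have w1: "ww a \<notin> V.span {r,q,p} \<and> ww a \<notin> {r,q,p}"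
    by (rule notin_span_sub[where Z=Y1]) (unfold Y1_def, rule span_coord, use r p0 in \<open>auto\<close>)
  have i4: "V.independent {ww a,r,q,p}" by (rule V.independent_insertI[OF conjunct1[OF w1] i3])
  have u1: "uu a \<notin> V.span {ww a,r,q,p} \<and> uu a \<notin> {ww a,r,q,p}"
    by (rule notin_span_sub[where Z=Y0]) (unfold Y0_def, rule span_coord, use r p0 in \<open>auto\<close>)
  have i5: "V.independent {uu a,ww a,r,q,p}" by (rule V.independent_insertI[OF conjunct1[OF u1] i4])
  have cB: "card {uu a,ww a,r,q,p} = 5" using u1 w1 r1 q1 by simp
  have BS: "{uu a,ww a,r,q,p} \<subseteq> S" using uS pS r by auto
  have Samb: "S \<subseteq> ambient (m+3)" unfolding S_def
    using UU_amb am by (intro V.span_minimal ambient_subspace) auto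
  obtain A where A: "A \<subseteq> S" "V.independent A" "S \<subseteq> V.span A" "card A = V.dim S"
    by (rule V.basis_exists)
  have AS: "A \<subseteq> ambient (m+3)" using A(1) Samb by (rule subset_trans)
  have finA: "finite A" by (rule finite_subset[OF AS conjunct1[OF ambient_finite_card]])
  have BA: "{uu a,ww a,r,q,p} \<subseteq> V.span A" using BS A(3) by (rule subset_trans)
  have "card {uu a,ww a,r,q,p} \<le> card A"
    by (rule conjunct2[OF V.independent_span_bound[OF finA i5 BA]])
  hence "5 \<le> V.dim S" using cB A(4) by linarith
  thus ?thesis unfolding S_def .
qed


lemma lower_code:
  "covering_code (m+3) 2 3 3 (UU ` ambient m) \<and> 2^m \<le> card (UU ` ambient m)"
proof
  have inj: "inj_on UU (ambient m)" by (rule inj_onI) (rule UU_inj)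
  show "2^m \<le> card (UU ` ambient m)" using card_image[OF inj] ambient_card_ge[of m] by simp
  have G: "UU ` ambient m \<subseteq> grass (m+3) 2" using UU_grass by blast
  have T: "2 + 3 \<le> V.dim (V.span (\<Union>A))" if A: "A \<subseteq> UU ` ambient m" "card A = 3" for A
  proof -
    obtain X Y Z where XYZ: "A = {X,Y,Z}" "X \<noteq> Y" "Y \<noteq> Z" "X \<noteq> Z"
      using A(2) unfolding card_3_iff by blast
    have "X \<in> UU ` ambient m" "Y \<in> UU ` ambient m" "Z \<in> UU ` ambient m" using A(1) XYZ(1) by auto
    then obtain a b c where abc: "a \<in> ambient m" "b \<in> ambient m" "c \<in> ambient m"
      "X = UU a" "Y = UU b" "Z = UU c" by blast
    have ne: "a \<noteq> b" "a \<noteq> c" "b \<noteq> c" using XYZ abc by auto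
    have "\<Union>A = UU a \<union> UU b \<union> UU c" using XYZ(1) abc by auto
    thus ?thesis using triple[OF abc(1-3) ne] by simp
  qed
  show "covering_code (m+3) 2 3 3 (UU ` ambient m)"
    unfolding covering_code_def using G T by blast
qed

lemma B2_set_fin: "finite {card C |C :: (nat\<Rightarrow>bit) set set. covering_code n 2 3 3 C}"
  by (rule finite_subset[of _ "{..2*2^n}"]) (use upper in auto)

lemma B2_upper: "B2 n 2 3 3 \<le> 2 * 2^n"
proof -
  have ne: "{card C |C :: (nat\<Rightarrow>bit) set set. covering_code n 2 3 3 C} \<noteq> {}"
  proof -
    have "covering_code n 2 3 3 ({} :: (nat\<Rightarrow>bit) set set)" by (simp add: covering_code_def)
    thus ?thesis by blast
  qed
  show ?thesis unfolding B2_def using B2_set_fin ne upper by (subst Max_le_iff) auto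
qed

lemma B2_lower: "2^m \<le> B2 (m+3) 2 3 3"
proof -
  have "card (UU ` ambient m) \<in> {card C |C :: (nat\<Rightarrow>bit) set set. covering_code (m+3) 2 3 3 C}"
    using lower_code by blast
  hence "card (UU ` ambient m) \<le> B2 (m+3) 2 3 3" unfolding B2_def using B2_set_fin by simp
  thus ?thesis using conjunct2[OF lower_code[of m]] by (rule order.trans[rotated])
qed

theorem mainTheorem9:
  shows "(\<lambda>n. real (B2 n 2 3 3)) \<in> \<Theta>(\<lambda>n. 2 ^ n)"
proof (rule bigthetaI')
  show "(1/8::real) > 0" "(2::real) > 0" by simp_all
  have "(1/8) * norm ((2::real)^n) \<le> norm (real (B2 n 2 3 3)) \<and>
        norm (real (B2 n 2 3 3)) \<le> 2 * norm ((2::real)^n)" if n: "n \<ge> 3" for n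
  proof -
    obtain m where m: "n = m + 3" using n by (metis add.commute le_Suc_ex)
    have l: "(2::real)^m \<le> real (B2 n 2 3 3)" using B2_lower[of m] m
      by (metis of_nat_le_iff of_nat_numeral of_nat_power)
    have u: "real (B2 n 2 3 3) \<le> 2 * 2^n" using B2_upper[of n]
      by (metis of_nat_le_iff of_nat_mult of_nat_numeral of_nat_power)
    have "(2::real)^n = 8 * 2^m" unfolding m by (simp add: power_add)
    thus ?thesis using l u by simp
  qed
  note H = this
  show "\<forall>\<^sub>F x in at_top. (1/8) * norm ((2::real)^x) \<le> norm (real (B2 x 2 3 3)) \<and>
        norm (real (B2 x 2 3 3)) \<le> 2 * norm ((2::real)^x)"
    by (rule eventually_mono[OF eventually_ge_at_top[of "3::nat"]]) (rule H)
qed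

end
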